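(* Let $\psi$ be a pure state with Hamiltonian $H$ having period $\tau>0$, i.e. $\tau=\inf\{t>0:|\langle\psi|e^{-iHt}|\psi\rangle|=1\}$, with energy reference chosen so that $e^{-iH\tau}|\psi\rangle=|\psi\rangle$. Let $p_\psi(n)=\frac1{2\pi}\int_0^{2\pi}e^{i\theta n}\langle\psi|e^{-iH\tau\theta/2\pi}|\psi\rangle d\theta$, $n\in\mathbb Z$ (the probability that $\psi$ has energy $2\pi n/\tau$), and assume $H$ is bounded below. Then there exists a finite integer $L\ge1$ such that the $L$-fold convolution $p_{\psi^{\otimes L}}=p_\psi*\cdots*p_\psi$ satisfies $$\tfrac12\sum_{n\in\mathbb Z}|p_{\psi^{\otimes L}}(n)-p_{\psi^{\otimes L}}(n+1)|<1.$$
   Context: The distribution $p_{\psi^{\otimes L}}$ is the energy distribution of $\psi^{\otimes L}$ with respect to the non-interacting total Hamiltonian $\sum_{i=1}^L I^{\otimes(i-1)}\otimes H\otimes I^{\otimes(L-i)}$ (in units of $2\pi/\tau$). *)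

theory Defs
  imports "HOL-Probability.Probability"
begin

text \<open>A pure state psi together with its Hamiltonian H is represented by the spectral
  (energy) measure mu of H in the state psi: a Borel probability measure on the reals.\<close>

definition overlap :: "real measure \<Rightarrow> real \<Rightarrow> complex" where
  "overlap \<mu> t = integral\<^sup>L \<mu> (\<lambda>E. cis (- (E * t)))"

definition energy_dist :: "real measure \<Rightarrow> real \<Rightarrow> int \<Rightarrow> complex" where
  "energy_dist \<mu> \<tau> n =
     complex_of_real (1 / (2 * pi)) *
       integral {0..2*pi} (\<lambda>\<theta>. cis (\<theta> * of_int n) * overlap \<mu> (\<tau> * \<theta> / (2 * pi)))"

definition int_conv :: "(int \<Rightarrow> complex) \<Rightarrow> (int \<Rightarrow> complex) \<Rightarrow> int \<Rightarrow> complex" where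
  "int_conv f g n = (\<Sum>\<^sub>\<infinity>k\<in>UNIV. f k * g (n - k))"

fun conv_power :: "(int \<Rightarrow> complex) \<Rightarrow> nat \<Rightarrow> int \<Rightarrow> complex" where
  "conv_power f 0 = (\<lambda>n. if n = 0 then 1 else 0)"
| "conv_power f (Suc L) = int_conv f (conv_power f L)"

end

theory Submission
  imports Defs
begin

lemma meas_cont:
  fixes h :: "real \<Rightarrow> 'b::{topological_space, second_countable_topology}"
  assumes "sets \<mu> = sets borel" "continuous_on UNIV h"
  shows "h \<in> borel_measurable \<mu>"
  by (subst measurable_cong_sets[OF assms(1) refl]) (rule borel_measurable_continuous_onI[OF assms(2)])

lemma integrable_cis:
  assumes "prob_space \<mu>" "sets \<mu> = sets borel"
  shows "integrable \<mu> (\<lambda>E. cis (a * E + b))"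
proof -
  interpret prob_space \<mu> by fact
  show ?thesis
    by (intro integrable_const_bound[where B=1] AE_I2 meas_cont[OF assms(2)])
       (auto intro!: continuous_intros)
qed

lemma lattice_AE:
  assumes "prob_space \<mu>" "sets \<mu> = sets borel" "overlap \<mu> \<tau> = 1"
  shows "AE E in \<mu>. \<exists>m::int. E * \<tau> = 2 * pi * m"
proof -
  interpret prob_space \<mu> by fact
  have int: "integrable \<mu> (\<lambda>E. cis ((-\<tau>) * E + 0))" by (rule integrable_cis[OF assms(1,2)])
  have eq: "(\<lambda>E. cis ((-\<tau>) * E + 0)) = (\<lambda>E. cis (- (E * \<tau>)))" by (auto simp: algebra_simps)
  have int': "integrable \<mu> (\<lambda>E. cis (- (E * \<tau>)))" using int by (simp only: eq)
  have reeq: "(\<lambda>E. Re (cis (- (E * \<tau>)))) = (\<lambda>E. cos (E * \<tau>))" by simp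
  have int2: "integrable \<mu> (\<lambda>E. cos (E * \<tau>))"
    using integrable_Re[OF int'] by (simp only: reeq)
  have i1: "integral\<^sup>L \<mu> (\<lambda>E. cos (E * \<tau>)) = 1"
    using integral_Re[OF int'] assms(3) unfolding reeq overlap_def by simp
  have "integral\<^sup>L \<mu> (\<lambda>E. 1 - cos (E * \<tau>)) = 0"
    using i1 int2 by (simp add: prob_space)
  moreover have "integrable \<mu> (\<lambda>E. 1 - cos (E * \<tau>))" using int2 by simp
  ultimately have "AE E in \<mu>. 1 - cos (E * \<tau>) = 0"
    using integral_nonneg_eq_0_iff_AE[of \<mu> "\<lambda>E. 1 - cos (E * \<tau>)"] by simp
  then show ?thesis
  proof (rule AE_mp, intro AE_I2 impI)
    fix E assume "1 - cos (E * \<tau>) = 0"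
    then have "cos (E * \<tau>) = 1" by simp
    then obtain n :: int where "E * \<tau> = real_of_int n * 2 * pi" using cos_one_2pi_int by blast
    then show "\<exists>m::int. E * \<tau> = 2 * pi * m" by (intro exI[of _ n]) simp
  qed
qed


lemma int_cis:
  fixes k :: int
  shows "integral {0..2*pi} (\<lambda>\<theta>. cis (\<theta> * of_int k)) = (if k = 0 then 2*pi else 0)"
proof (cases "k = 0")
  case True then show ?thesis by (simp add: scaleR_conv_of_real)
next
  case False
  define c where "c = \<i> * of_int k"
  have c0: "c \<noteq> 0" using False by (simp add: c_def)
  have eq: "\<And>\<theta>. cis (\<theta> * of_int k) = exp (c * of_real \<theta>)"
    by (simp add: cis_conv_exp c_def mult_ac)
  have d: "\<And>x. ((\<lambda>\<theta>. exp (c * of_real \<theta>) / c) has_vector_derivative exp (c * of_real x)) (at x within {0..2*pi})"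
  proof -
    fix x :: real
    have "((\<lambda>z. exp (c * z) / c) has_field_derivative exp (c * of_real x)) (at (of_real x))"
      using c0 by (auto intro!: derivative_eq_intros)
    then show "?thesis x" by (rule has_vector_derivative_real_field)
  qed
  have "((\<lambda>\<theta>. exp (c * of_real \<theta>)) has_integral (exp (c * of_real (2*pi)) / c - exp (c * of_real 0) / c)) {0..2*pi}"
    by (rule fundamental_theorem_of_calculus) (auto intro: d)
  moreover have "exp (c * of_real (2*pi)) = 1"
  proof -
    have "exp (c * of_real (2*pi)) = cis (2 * pi * of_int k)" by (simp add: cis_conv_exp c_def mult_ac)
    also have "\<dots> = 1" by (simp add: cis.ctr complex_eq_iff)
    finally show ?thesis .
  qed
  ultimately have "((\<lambda>\<theta>. cis (\<theta> * of_int k)) has_integral 0) {0..2*pi}" by (simp add: eq)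
  then show ?thesis using False by (simp add: integral_unique)
qed


lemma cis_meas[measurable]: "cis \<in> borel_measurable borel"
  by (intro borel_measurable_continuous_onI continuous_intros)

lemma energy_dist_eq:
  assumes "prob_space \<mu>" "sets \<mu> = sets borel" "\<tau> \<noteq> 0"
    and lat: "AE E in \<mu>. \<exists>m::int. E * \<tau> = 2 * pi * m"
  shows "energy_dist \<mu> \<tau> n = complex_of_real (measure \<mu> {2 * pi * of_int n / \<tau>})"
proof -
  interpret prob_space \<mu> by fact
  interpret P: pair_sigma_finite lborel \<mu> ..
  note [measurable_cong] = assms(2)
  define f where "f = (\<lambda>\<theta> E. indicator {0..2*pi} \<theta> *\<^sub>R (cis (\<theta> * of_int n) * cis (-(E * (\<tau>*\<theta>/(2*pi))))) :: complex)"
  define G where "G = (\<lambda>\<theta>. cis (\<theta> * of_int n) * overlap \<mu> (\<tau>*\<theta>/(2*pi)))"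
  have fm: "case_prod f \<in> borel_measurable (lborel \<Otimes>\<^sub>M \<mu>)"
    unfolding f_def by measurable
  have fint: "integrable (lborel \<Otimes>\<^sub>M \<mu>) (case_prod f)"
  proof (rule integrableI_bounded_set[where A="{0..2*pi} \<times> space \<mu>" and B=1])
    show "emeasure (lborel \<Otimes>\<^sub>M \<mu>) ({0..2*pi} \<times> space \<mu>) < \<infinity>"
      by (subst emeasure_pair_measure_Times) (auto simp: ennreal_mult_less_top emeasure_space_1)
    show "AE x in lborel \<Otimes>\<^sub>M \<mu>. x \<in> {0..2*pi} \<times> space \<mu> \<longrightarrow> cmod (case_prod f x) \<le> 1"
      by (intro AE_I2) (auto simp: f_def norm_mult split: split_indicator)
    show "AE x in lborel \<Otimes>\<^sub>M \<mu>. x \<notin> {0..2*pi} \<times> space \<mu> \<longrightarrow> case_prod f x = 0"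
      by (intro AE_I2) (auto simp: f_def space_pair_measure indicator_def)
  qed (use fm in auto)
  have inner1: "\<And>\<theta>. (\<integral>E. f \<theta> E \<partial>\<mu>) = indicator {0..2*pi} \<theta> *\<^sub>R G \<theta>"
    by (simp add: f_def G_def overlap_def)
  have "integrable lborel (\<lambda>\<theta>. \<integral>E. f \<theta> E \<partial>\<mu>)"
    using P.integrable_fst[OF fint] .
  then have si: "set_integrable lborel {0..2*pi} G"
    unfolding set_integrable_def inner1 .
  have rhs: "(\<integral>\<theta>. (\<integral>E. f \<theta> E \<partial>\<mu>) \<partial>lborel) = integral {0..2*pi} G"
    using set_borel_integral_eq_integral(2)[OF si]
    by (simp add: inner1 set_lebesgue_integral_def)
  have inner2: "AE E in \<mu>. (\<integral>\<theta>. f \<theta> E \<partial>lborel) = complex_of_real (2 * pi * indicator {2 * pi * of_int n / \<tau>} E)"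
    using lat
  proof (rule AE_mp, intro AE_I2 impI)
    fix E assume "\<exists>m::int. E * \<tau> = 2 * pi * m"
    then obtain m :: int where m: "E * \<tau> = 2 * pi * m" by blast
    have ceq: "\<And>\<theta>. cis (\<theta> * of_int n) * cis (-(E * (\<tau>*\<theta>/(2*pi)))) = cis (\<theta> * of_int (n - m))"
    proof -
      fix \<theta> :: real
      have "E * (\<tau>*\<theta>/(2*pi)) = \<theta> * m" using m by (simp add: field_simps)
      then show "cis (\<theta> * of_int n) * cis (-(E * (\<tau>*\<theta>/(2*pi)))) = cis (\<theta> * of_int (n - m))"
        by (simp add: cis_mult algebra_simps)
    qed
    have si2: "set_integrable lborel {0..2*pi} (\<lambda>\<theta>. cis (\<theta> * of_int (n - m)))"
      by (intro borel_integrable_atLeastAtMost' continuous_intros)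
    have "(\<integral>\<theta>. f \<theta> E \<partial>lborel) = integral {0..2*pi} (\<lambda>\<theta>. cis (\<theta> * of_int (n - m)))"
      using set_borel_integral_eq_integral(2)[OF si2]
      unfolding f_def ceq set_lebesgue_integral_def by simp
    also have "\<dots> = (if n - m = 0 then 2*pi else 0)" by (rule int_cis)
    also have "\<dots> = complex_of_real (2 * pi * indicator {2 * pi * of_int n / \<tau>} E)"
    proof -
      have "(n - m = 0) \<longleftrightarrow> E = 2 * pi * of_int n / \<tau>"
      proof
        assume "n - m = 0" then show "E = 2 * pi * of_int n / \<tau>" using m assms(3) by (simp add: field_simps)
      next
        assume "E = 2 * pi * of_int n / \<tau>"
        then have "2 * pi * of_int n = 2 * pi * (of_int m :: real)" using m assms(3) by (simp add: field_simps)
        then show "n - m = 0" by simp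
      qed
      then show ?thesis by (auto simp: indicator_def)
    qed
    finally show "(\<integral>\<theta>. f \<theta> E \<partial>lborel) = complex_of_real (2 * pi * indicator {2 * pi * of_int n / \<tau>} E)" .
  qed
  have lhs: "(\<integral>E. (\<integral>\<theta>. f \<theta> E \<partial>lborel) \<partial>\<mu>) = complex_of_real (2 * pi * measure \<mu> {2 * pi * of_int n / \<tau>})"
  proof -
    have "(\<integral>E. (\<integral>\<theta>. f \<theta> E \<partial>lborel) \<partial>\<mu>) = (\<integral>E. complex_of_real (2 * pi * indicator {2 * pi * of_int n / \<tau>} E) \<partial>\<mu>)"
      by (rule integral_cong_AE) (use inner2 fm in auto)
    also have "\<dots> = complex_of_real (2 * pi * measure \<mu> {2 * pi * of_int n / \<tau>})"
      using assms(2) by (simp add: sets_eq_imp_space_eq)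
    finally show ?thesis .
  qed
  have "(\<integral>E. (\<integral>\<theta>. f \<theta> E \<partial>lborel) \<partial>\<mu>) = (\<integral>\<theta>. (\<integral>E. f \<theta> E \<partial>\<mu>) \<partial>lborel)"
    by (rule P.Fubini_integral) (use fint in simp)
  then have "integral {0..2*pi} G = complex_of_real (2 * pi * measure \<mu> {2 * pi * of_int n / \<tau>})"
    using lhs rhs by simp
  then show ?thesis
    unfolding energy_dist_def G_def[symmetric] by simp
qed


lemma infsum_sum_fin:
  fixes f :: "'i \<Rightarrow> 'a \<Rightarrow> real"
  assumes "finite I" "\<And>i. i \<in> I \<Longrightarrow> f i summable_on A"
  shows "(\<lambda>x. \<Sum>i\<in>I. f i x) summable_on A \<and> infsum (\<lambda>x. \<Sum>i\<in>I. f i x) A = (\<Sum>i\<in>I. infsum (f i) A)"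
  using assms
proof (induction I rule: finite_induct)
  case empty then show ?case by simp
next
  case (insert j I)
  then have IH: "(\<lambda>x. \<Sum>i\<in>I. f i x) summable_on A" "infsum (\<lambda>x. \<Sum>i\<in>I. f i x) A = (\<Sum>i\<in>I. infsum (f i) A)"
    by auto
  have fj: "f j summable_on A" using insert by auto
  show ?case
    using insert.hyps IH fj
    by (simp add: summable_on_add infsum_add)
qed

fun Q :: "(int \<Rightarrow> real) \<Rightarrow> nat \<Rightarrow> int \<Rightarrow> real" where
  "Q w 0 = (\<lambda>n. if n = 0 then 1 else 0)"
| "Q w (Suc L) = (\<lambda>n. \<Sum>\<^sub>\<infinity>k\<in>UNIV. w k * Q w L (n - k))"

lemma shift_sum_le:
  fixes g :: "int \<Rightarrow> real"
  assumes "\<And>F. finite F \<Longrightarrow> sum g F \<le> B" "finite F"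
  shows "(\<Sum>n\<in>F. g (n + c)) \<le> B"
proof -
  have "(\<Sum>n\<in>F. g (n + c)) = sum g ((\<lambda>n. n + c) ` F)"
    by (subst sum.reindex) (auto simp: inj_on_def)
  also have "\<dots> \<le> B" using assms by auto
  finally show ?thesis .
qed

lemma single_le_finsum:
  fixes g :: "int \<Rightarrow> real"
  assumes "\<And>F. finite F \<Longrightarrow> sum g F \<le> B"
  shows "g n \<le> B"
  using assms[of "{n}"] by simp

locale wdist =
  fixes w :: "int \<Rightarrow> real"
  assumes w_nonneg: "\<And>n. w n \<ge> 0"
    and w_sum: "\<And>F. finite F \<Longrightarrow> sum w F \<le> 1"
begin

lemma Q_props:
  shows "(\<forall>n. Q w L n \<ge> 0) \<and> (\<forall>F. finite F \<longrightarrow> sum (Q w L) F \<le> 1)"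
proof (induction L)
  case 0
  have "sum (Q w 0) F \<le> 1" if "finite F" for F
  proof -
    have "sum (Q w 0) F = (if 0 \<in> F then 1 else 0)"
      using that by (simp add: sum.If_cases)
    then show ?thesis by simp
  qed
  then show ?case by auto
next
  case (Suc L)
  then have nn: "\<And>n. Q w L n \<ge> 0" and sm: "\<And>F. finite F \<Longrightarrow> sum (Q w L) F \<le> 1" by auto
  have le1: "\<And>n. Q w L n \<le> 1" using single_le_finsum[OF sm] .
  have summ: "(\<lambda>k. w k * Q w L (n - k)) summable_on UNIV" for n
  proof (rule nonneg_bdd_above_summable_on)
    show "\<And>k. k \<in> UNIV \<Longrightarrow> 0 \<le> w k * Q w L (n - k)" using w_nonneg nn by simp
    show "bdd_above (sum (\<lambda>k. w k * Q w L (n - k)) ` {F. F \<subseteq> UNIV \<and> finite F})"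
    proof (rule bdd_aboveI[where M=1], clarsimp)
      fix F :: "int set" assume "finite F"
      have "(\<Sum>k\<in>F. w k * Q w L (n - k)) \<le> (\<Sum>k\<in>F. w k)"
        by (intro sum_mono) (use w_nonneg le1 in \<open>auto intro: mult_left_le\<close>)
      also have "\<dots> \<le> 1" using w_sum \<open>finite F\<close> .
      finally show "(\<Sum>k\<in>F. w k * Q w L (n - k)) \<le> 1" .
    qed
  qed
  have "Q w (Suc L) n \<ge> 0" for n
    using w_nonneg nn by (simp add: infsum_nonneg)
  moreover have "sum (Q w (Suc L)) F \<le> 1" if "finite F" for F
  proof -
    have "sum (Q w (Suc L)) F = (\<Sum>n\<in>F. \<Sum>\<^sub>\<infinity>k\<in>UNIV. w k * Q w L (n - k))" by simp
    also have "\<dots> = (\<Sum>\<^sub>\<infinity>k\<in>UNIV. \<Sum>n\<in>F. w k * Q w L (n - k))"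
      using infsum_sum_fin[of F "\<lambda>n k. w k * Q w L (n - k)" UNIV] that summ by simp
    also have "\<dots> \<le> 1"
    proof (rule infsum_le_finite_sums)
      show "(\<lambda>k. \<Sum>n\<in>F. w k * Q w L (n - k)) summable_on UNIV"
        using infsum_sum_fin[of F "\<lambda>n k. w k * Q w L (n - k)" UNIV] that summ by simp
      fix K :: "int set" assume K: "finite K"
      have "(\<Sum>k\<in>K. \<Sum>n\<in>F. w k * Q w L (n - k)) = (\<Sum>k\<in>K. w k * (\<Sum>n\<in>F. Q w L (n + (- k))))"
        by (simp add: sum_distrib_left)
      also have "\<dots> \<le> (\<Sum>k\<in>K. w k)"
        by (intro sum_mono mult_left_le w_nonneg shift_sum_le[OF sm that])
      also have "\<dots> \<le> 1" using w_sum K .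
      finally show "(\<Sum>k\<in>K. \<Sum>n\<in>F. w k * Q w L (n - k)) \<le> 1" .
    qed
    finally show ?thesis .
  qed
  ultimately show ?case by auto
qed

lemma Q_nonneg: "Q w L n \<ge> 0" using Q_props by auto
lemma Q_sum: "finite F \<Longrightarrow> sum (Q w L) F \<le> 1" using Q_props by auto

lemma Q_summ: "(\<lambda>k. w k * Q w L (n - k)) summable_on UNIV"
proof (rule nonneg_bdd_above_summable_on)
  show "\<And>k. k \<in> UNIV \<Longrightarrow> 0 \<le> w k * Q w L (n - k)" using w_nonneg Q_nonneg by simp
  show "bdd_above (sum (\<lambda>k. w k * Q w L (n - k)) ` {F. F \<subseteq> UNIV \<and> finite F})"
  proof (rule bdd_aboveI[where M=1], clarsimp)
    fix F :: "int set" assume "finite F"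
    have "(\<Sum>k\<in>F. w k * Q w L (n - k)) \<le> (\<Sum>k\<in>F. w k)"
      by (intro sum_mono) (use w_nonneg single_le_finsum[OF Q_sum] in \<open>auto intro: mult_left_le\<close>)
    also have "\<dots> \<le> 1" using w_sum \<open>finite F\<close> .
    finally show "(\<Sum>k\<in>F. w k * Q w L (n - k)) \<le> 1" .
  qed
qed

lemma conv_power_Q: "conv_power (\<lambda>n. complex_of_real (w n)) L = (\<lambda>n. complex_of_real (Q w L n))"
proof (induction L)
  case 0 then show ?case by auto
next
  case (Suc L)
  show ?case
  proof
    fix n
    have "conv_power (\<lambda>n. complex_of_real (w n)) (Suc L) n
        = (\<Sum>\<^sub>\<infinity>k\<in>UNIV. complex_of_real (w k * Q w L (n - k)))"
      by (simp add: int_conv_def Suc)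
    also have "\<dots> = complex_of_real (\<Sum>\<^sub>\<infinity>k\<in>UNIV. w k * Q w L (n - k))"
      by (rule infsumI, rule has_sum_of_real, rule has_sum_infsum, rule Q_summ)
    finally show "conv_power (\<lambda>n. complex_of_real (w n)) (Suc L) n = complex_of_real (Q w (Suc L) n)"
      by simp
  qed
qed

end

fun sumset :: "(int \<Rightarrow> real) \<Rightarrow> nat \<Rightarrow> int set" where
  "sumset w 0 = {0}"
| "sumset w (Suc L) = {k + r | k r. w k > 0 \<and> r \<in> sumset w L}"

lemma sumset_add: "u \<in> sumset w L \<Longrightarrow> v \<in> sumset w L' \<Longrightarrow> u + v \<in> sumset w (L + L')"
proof (induction L arbitrary: u)
  case 0 then show ?case by simp
next
  case (Suc L)
  then obtain k r where "u = k + r" "w k > 0" "r \<in> sumset w L" by auto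
  then have "r + v \<in> sumset w (L + L')" using Suc by auto
  moreover have "u + v = k + (r + v)" using \<open>u = k + r\<close> by simp
  moreover have "k + (r + v) \<in> sumset w (Suc (L + L'))"
    using \<open>w k > 0\<close> \<open>r + v \<in> sumset w (L + L')\<close> by (simp only: sumset.simps) blast
  ultimately show ?case by (simp add: add.assoc)
qed

lemma consecutive:
  fixes w :: "int \<Rightarrow> real"
  assumes H: "\<And>d a. d \<ge> 2 \<Longrightarrow> \<not> (\<forall>n. w n > 0 \<longrightarrow> d dvd (n - a))"
  shows "\<exists>L n. n \<in> sumset w L \<and> n + 1 \<in> sumset w L"
proof -
  define T where "T = {t. \<exists>L u v. u \<in> sumset w L \<and> v \<in> sumset w L \<and> t = u - v}"
  have T_add: "s + t \<in> T" if sT: "s \<in> T" and tT: "t \<in> T" for s t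
  proof -
    obtain L u v where 1: "u \<in> sumset w L" "v \<in> sumset w L" "s = u - v" using sT unfolding T_def by blast
    obtain L' u' v' where 2: "u' \<in> sumset w L'" "v' \<in> sumset w L'" "t = u' - v'" using tT unfolding T_def by blast
    have "u + u' \<in> sumset w (L + L')" "v + v' \<in> sumset w (L + L')" using 1 2 sumset_add by auto
    moreover have "s + t = (u + u') - (v + v')" using 1 2 by simp
    ultimately show ?thesis unfolding T_def by blast
  qed
  have T_neg: "- t \<in> T" if "t \<in> T" for t
    using that unfolding T_def by (auto) (metis minus_diff_eq)
  have T_0: "0 \<in> T" unfolding T_def by (auto intro!: exI[of _ 0])
  have T_S: "n - a \<in> T" if "w n > 0" "w a > 0" for n a
  proof -
    have "n \<in> sumset w 1" "a \<in> sumset w 1" using that by (auto intro!: exI[of _ n] exI[of _ a])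
    then show ?thesis unfolding T_def by blast
  qed
  have T_nat: "int q * t \<in> T" if "t \<in> T" for q t
  proof (induction q)
    case 0 then show ?case using T_0 by simp
  next
    case (Suc q) then show ?case using T_add[OF that Suc] by (simp add: algebra_simps)
  qed
  have T_int: "q * t \<in> T" if "t \<in> T" for q t
  proof (cases "q \<ge> 0")
    case True then show ?thesis using T_nat[OF that, of "nat q"] by simp
  next
    case False then show ?thesis using T_neg[OF T_nat[OF that, of "nat (- q)"]] by simp
  qed
  obtain a where a: "w a > 0" using H[of 2 0] by auto
  show ?thesis
  proof (cases "\<exists>t\<in>T. t > 0")
    case True
    then obtain t0 where t0: "t0 \<in> T" "t0 > 0" by auto
    define d where "d = (LEAST k::nat. k > 0 \<and> int k \<in> T)"
    have ex: "nat t0 > 0 \<and> int (nat t0) \<in> T" using t0 by simp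
    have dT: "d > 0" "int d \<in> T" using LeastI_ex[of "\<lambda>k::nat. k > 0 \<and> int k \<in> T"] ex unfolding d_def by blast+
    have dmin: "\<And>k::nat. k > 0 \<Longrightarrow> int k \<in> T \<Longrightarrow> d \<le> k" unfolding d_def by (rule Least_le) simp
    have ddvd: "int d dvd t" if "t \<in> T" for t
    proof (rule ccontr)
      assume nd: "\<not> int d dvd t"
      have e: "t mod int d = t + (- (t div int d)) * int d" by (simp add: mod_div_mult_eq[symmetric] algebra_simps minus_div_mult_eq_mod[symmetric])
      have "t + (- (t div int d)) * int d \<in> T" by (rule T_add[OF that T_int[OF dT(2)]])
      then have mT: "t mod int d \<in> T" by (simp only: e)
      have pos: "t mod int d > 0" using nd dT(1) by (simp add: dvd_eq_mod_eq_0 order_le_neq_trans pos_mod_sign)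
      have lt: "t mod int d < int d" using dT(1) by simp
      have "d \<le> nat (t mod int d)" using dmin[of "nat (t mod int d)"] mT pos by simp
      then show False using lt pos by linarith
    qed
    show ?thesis
    proof (cases "d = 1")
      case True
      then have "1 \<in> T" using dT by simp
      then obtain L u v where "u \<in> sumset w L" "v \<in> sumset w L" "1 = u - v" unfolding T_def by blast
      then show ?thesis by (intro exI[of _ L] exI[of _ v]) (auto simp: algebra_simps)
    next
      case False
      then have "int d \<ge> 2" using dT(1) by simp
      moreover have "\<forall>n. w n > 0 \<longrightarrow> int d dvd (n - a)" using ddvd T_S a by auto
      ultimately show ?thesis using H by blast
    qed
  next
    case False
    have "\<forall>n. w n > 0 \<longrightarrow> (2::int) dvd (n - a)"
    proof (intro allI impI)
      fix n assume "w n > 0"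
      then have "n - a \<in> T" "a - n \<in> T" using T_S a by auto
      then have "\<not> (n - a > 0)" "\<not> (a - n > 0)" using False by blast+
      then have "n - a = 0" by linarith
      then show "(2::int) dvd (n - a)" by simp
    qed
    then show ?thesis using H[of 2 a] by simp
  qed
qed

context wdist begin

lemma Q_pos: "n \<in> sumset w L \<Longrightarrow> Q w L n > 0"
proof (induction L arbitrary: n)
  case 0 then show ?case by simp
next
  case (Suc L)
  then obtain k r where kr: "n = k + r" "w k > 0" "r \<in> sumset w L" by auto
  have "Q w L r > 0" using Suc kr by auto
  then have p: "w k * Q w L (n - k) > 0" using kr by simp
  have "(\<Sum>\<^sub>\<infinity>j\<in>{k}. w j * Q w L (n - j)) \<le> (\<Sum>\<^sub>\<infinity>j\<in>UNIV. w j * Q w L (n - j))"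
    by (rule infsum_mono_neutral) (auto intro!: Q_summ mult_nonneg_nonneg w_nonneg Q_nonneg)
  then show ?case using p by simp
qed

lemma final:
  assumes H: "\<And>d a. d \<ge> 2 \<Longrightarrow> \<not> (\<forall>n. w n > 0 \<longrightarrow> d dvd (n - a))"
  shows "\<exists>L::nat. L \<ge> 1 \<and>
    (let P = conv_power (\<lambda>n. complex_of_real (w n)) L in
      (\<lambda>n. cmod (P n - P (n + 1))) summable_on (UNIV :: int set) \<and>
      (1/2) * (\<Sum>\<^sub>\<infinity>n\<in>(UNIV :: int set). cmod (P n - P (n + 1))) < 1)"
proof -
  obtain L n0 where L: "n0 \<in> sumset w L" "n0 + 1 \<in> sumset w L" using consecutive[OF H] by blast
  have L1: "L \<ge> 1" using L by (cases L) auto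
  define q where "q = Q w L"
  define m where "m = min (q n0) (q (n0 + 1))"
  have mpos: "m > 0" using Q_pos[OF L(1)] Q_pos[OF L(2)] by (simp add: m_def q_def)
  have qn: "\<And>n. q n \<ge> 0" by (simp add: q_def Q_nonneg)
  have qs: "\<And>F. finite F \<Longrightarrow> sum q F \<le> 1" by (simp add: q_def Q_sum)
  have eqf: "(\<lambda>n. cmod (conv_power (\<lambda>n. complex_of_real (w n)) L n - conv_power (\<lambda>n. complex_of_real (w n)) L (n + 1)))
     = (\<lambda>n. \<bar>q n - q (n + 1)\<bar>)"
    by (simp add: conv_power_Q q_def flip: of_real_diff)
  have bnd: "(\<Sum>n\<in>F. \<bar>q n - q (n + 1)\<bar>) \<le> 2 - 2 * m" if F: "finite F" for F
  proof -
    define F' where "F' = insert n0 F"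
    have fF': "finite F'" using F by (simp add: F'_def)
    have n0F': "n0 \<in> F'" by (simp add: F'_def)
    have "(\<Sum>n\<in>F. \<bar>q n - q (n + 1)\<bar>) \<le> (\<Sum>n\<in>F'. \<bar>q n - q (n + 1)\<bar>)"
      by (rule sum_mono2) (auto simp: F'_def F)
    also have "\<dots> = \<bar>q n0 - q (n0 + 1)\<bar> + (\<Sum>n\<in>F' - {n0}. \<bar>q n - q (n + 1)\<bar>)"
      using sum.remove[OF fF' n0F', of "\<lambda>n. \<bar>q n - q (n + 1)\<bar>"] by simp
    also have "\<dots> \<le> (q n0 + q (n0 + 1) - 2 * m) + (\<Sum>n\<in>F' - {n0}. q n + q (n + 1))"
    proof (rule add_mono)
      show "\<bar>q n0 - q (n0 + 1)\<bar> \<le> q n0 + q (n0 + 1) - 2 * m" by (simp add: m_def abs_if min_def)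
      show "(\<Sum>n\<in>F' - {n0}. \<bar>q n - q (n + 1)\<bar>) \<le> (\<Sum>n\<in>F' - {n0}. q n + q (n + 1))"
        by (intro sum_mono) (use qn in \<open>auto simp: abs_if\<close>)
    qed
    also have "\<dots> = (\<Sum>n\<in>F'. q n + q (n + 1)) - 2 * m"
      using sum.remove[OF fF' n0F', of "\<lambda>n. q n + q (n + 1)"] by simp
    also have "\<dots> = sum q F' + (\<Sum>n\<in>F'. q (n + 1)) - 2 * m" by (simp add: sum.distrib)
    also have "\<dots> \<le> 1 + 1 - 2 * m"
      using qs[OF fF'] shift_sum_le[OF qs fF', of 1] by simp
    finally show ?thesis by simp
  qed
  have summ: "(\<lambda>n. \<bar>q n - q (n + 1)\<bar>) summable_on (UNIV :: int set)"
  proof (rule nonneg_bdd_above_summable_on)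
    show "bdd_above (sum (\<lambda>n. \<bar>q n - q (n + 1)\<bar>) ` {F. F \<subseteq> UNIV \<and> finite F})"
      by (rule bdd_aboveI[where M="2 - 2 * m"]) (use bnd in blast)
  qed simp
  have "(\<Sum>\<^sub>\<infinity>n\<in>(UNIV :: int set). \<bar>q n - q (n + 1)\<bar>) \<le> 2 - 2 * m"
    by (rule infsum_le_finite_sums[OF summ]) (erule bnd)
  then have "(1/2) * (\<Sum>\<^sub>\<infinity>n\<in>(UNIV :: int set). \<bar>q n - q (n + 1)\<bar>) < 1" using mpos by simp
  then show ?thesis using L1 summ by (intro exI[of _ L]) (simp add: Let_def eqf)
qed

end

lemma cis_2pi_int: "cis (2 * pi * of_int j) = 1"
  by (simp add: cis.ctr complex_eq_iff)

lemma no_cong: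
  assumes ps: "prob_space \<mu>" and sb: "sets \<mu> = sets borel" and tp: "\<tau> > 0"
    and inf: "\<tau> = Inf {t. t > 0 \<and> cmod (overlap \<mu> t) = 1}"
    and lat: "AE E in \<mu>. \<exists>m::int. E * \<tau> = 2 * pi * m"
    and d2: "d \<ge> (2::int)"
    and H: "\<forall>n. measure \<mu> {2 * pi * of_int n / \<tau>} > 0 \<longrightarrow> d dvd (n - a)"
  shows False
proof -
  interpret prob_space \<mu> by fact
  define N where "N = (\<Union>m\<in>{m::int. measure \<mu> {2 * pi * of_int m / \<tau>} = 0}. {2 * pi * of_int m / \<tau>})"
  have "N \<in> null_sets \<mu>"
    unfolding N_def
  proof (rule null_sets_UN')
    show "countable {m::int. measure \<mu> {2 * pi * of_int m / \<tau>} = 0}" by (rule countableI_type)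
    fix m :: int assume "m \<in> {m::int. measure \<mu> {2 * pi * of_int m / \<tau>} = 0}"
    then have "measure \<mu> {2 * pi * of_int m / \<tau>} = 0" by simp
    moreover have "{2 * pi * of_int m / \<tau>} \<in> sets \<mu>" using sb by simp
    ultimately show "{2 * pi * of_int m / \<tau>} \<in> null_sets \<mu>"
      by (simp add: null_sets_def emeasure_eq_measure)
  qed
  then have aeN: "AE E in \<mu>. E \<notin> N" by (rule AE_not_in)
  define c where "c = cis (- (2 * pi * of_int a / of_int d))"
  have dpos: "real_of_int d > 0" using d2 by simp
  have ae: "AE E in \<mu>. cis (- (E * (\<tau> / of_int d))) = c"
    using lat aeN
  proof (eventually_elim)
    case (elim E)
    then obtain m :: int where m: "E * \<tau> = 2 * pi * m" by blast
    have Em: "E = 2 * pi * of_int m / \<tau>" using m tp by (simp add: field_simps)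
    have "measure \<mu> {2 * pi * of_int m / \<tau>} \<noteq> 0"
      using elim(2) Em unfolding N_def by blast
    then have "measure \<mu> {2 * pi * of_int m / \<tau>} > 0" using measure_nonneg[of \<mu>] by (simp add: order_le_neq_trans)
    then have "d dvd (m - a)" using H by blast
    then obtain j where j: "m - a = d * j" by (auto simp: dvd_def)
    have "E * (\<tau> / of_int d) = 2 * pi * of_int a / of_int d + 2 * pi * of_int j"
    proof -
      have "E * (\<tau> / of_int d) = 2 * pi * of_int m / of_int d" using m dpos by (simp add: field_simps)
      also have "of_int m = (of_int a + of_int d * of_int j :: real)" using j by (simp add: algebra_simps flip: of_int_mult of_int_add)
      finally show ?thesis using dpos by (simp add: field_simps)
    qed
    then have "cis (- (E * (\<tau> / of_int d))) = cis (- (2 * pi * of_int a / of_int d)) * cis (- (2 * pi * of_int j))"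
      by (simp add: cis_mult)
    also have "cis (- (2 * pi * of_int j)) = 1"
      using cis_2pi_int[of "- j"] by simp
    finally show ?case by (simp add: c_def)
  qed
  have "overlap \<mu> (\<tau> / of_int d) = (\<integral>E. c \<partial>\<mu>)"
    unfolding overlap_def by (rule integral_cong_AE) (use ae sb in \<open>auto intro!: meas_cont continuous_intros\<close>)
  also have "\<dots> = c" by (simp add: prob_space)
  finally have "cmod (overlap \<mu> (\<tau> / of_int d)) = 1" by (simp add: c_def)
  moreover have "\<tau> / of_int d > 0" using tp dpos by simp
  ultimately have mem: "\<tau> / of_int d \<in> {t. t > 0 \<and> cmod (overlap \<mu> t) = 1}" by simp
  have "Inf {t. t > 0 \<and> cmod (overlap \<mu> t) = 1} \<le> \<tau> / of_int d"
    by (rule cInf_lower[OF mem]) (auto intro: bdd_belowI[where m=0])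
  then have "\<tau> \<le> \<tau> / of_int d" using inf by simp
  moreover have "\<tau> / of_int d < \<tau>" using tp d2 by (simp add: divide_less_eq)
  ultimately show False by simp
qed

theorem mainTheorem7:
  fixes \<mu> :: "real measure" and \<tau> :: real
  assumes "prob_space \<mu>"
    and "sets \<mu> = sets borel"
    and "\<tau> > 0"
    and "\<tau> = Inf {t. t > 0 \<and> cmod (overlap \<mu> t) = 1}"
    and "overlap \<mu> \<tau> = 1"
    and "\<exists>c. AE E in \<mu>. c \<le> E"
  shows "\<exists>L::nat. L \<ge> 1 \<and>
    (let P = conv_power (energy_dist \<mu> \<tau>) L in
      (\<lambda>n. cmod (P n - P (n + 1))) summable_on (UNIV :: int set) \<and>
      (1/2) * (\<Sum>\<^sub>\<infinity>n\<in>(UNIV :: int set). cmod (P n - P (n + 1))) < 1)"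
proof -
  interpret prob_space \<mu> by fact
  have lat: "AE E in \<mu>. \<exists>m::int. E * \<tau> = 2 * pi * m"
    by (rule lattice_AE[OF assms(1,2,5)])
  define w where "w = (\<lambda>n::int. measure \<mu> {2 * pi * of_int n / \<tau>})"
  have ed: "energy_dist \<mu> \<tau> = (\<lambda>n. complex_of_real (w n))"
    using energy_dist_eq[OF assms(1,2) _ lat] assms(3) by (auto simp: w_def)
  interpret wdist w
  proof
    show "\<And>n. 0 \<le> w n" by (simp add: w_def)
    fix F :: "int set" assume F: "finite F"
    have inj: "inj_on (\<lambda>n::int. 2 * pi * of_int n / \<tau>) F" using assms(3) by (auto simp: inj_on_def)
    have "sum w F = (\<Sum>x\<in>(\<lambda>n::int. 2 * pi * of_int n / \<tau>) ` F. measure \<mu> {x})"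
      by (simp add: sum.reindex[OF inj] w_def)
    also have "\<dots> = measure \<mu> ((\<lambda>n::int. 2 * pi * of_int n / \<tau>) ` F)"
      by (rule finite_measure_eq_sum_singleton[symmetric]) (use F assms(2) in auto)
    also have "\<dots> \<le> 1" by simp
    finally show "sum w F \<le> 1" .
  qed
  have H: "\<not> (\<forall>n. w n > 0 \<longrightarrow> d dvd (n - a))" if "d \<ge> 2" for d a
    using no_cong[OF assms(1-4) lat that] unfolding w_def by blast
  show ?thesis using final[OF H] unfolding ed by blast
qed


end
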